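(* Given a finite hypergraph $H=(X,E)$, one can construct a set of points $P=\{p_e : e\in E\}$ in the plane (in convex position) and a family of convex polygons $\mathcal{R}=\{R_v: v\in X\}$ (possibly degenerate, each the convex hull of a subset of $P$) such that for every $e\in E$ and $v\in X$, $p_e\in R_v$ if and only if $v\in e$. Consequently, for every set $X'\subseteq X$ of $k$ vertices, the number of hyperedges $e\subseteq X'$ equals the number of points of $P$ exposed after deleting $\{R_v:v\in X'\}$ from $\mathcal{R}$, so a densest $k$-subhypergraph of $H$ corresponds to an optimal solution of max-exposure on $(P,\mathcal{R},k)$.
   Context: A point $p\in P$ is exposed with respect to a family of ranges $\mathcal{R}'$ if it lies in no range of $\mathcal{R}'$. Max-exposure: given $P$, $\mathcal{R}$ and $k$, delete $k$ ranges from $\mathcal{R}$ so as to maximize the number of exposed points. Densest $k$-subhypergraph: given a hypergraph $H=(X,E)$, find $k$ vertices maximizing the number of hyperedges entirely contained in them. *)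

theory Defs
  imports "HOL-Analysis.Analysis"
begin

definition exposed :: "'p set \<Rightarrow> 'p set set \<Rightarrow> 'p set" where
  "exposed P Rs = {q \<in> P. \<forall>r\<in>Rs. q \<notin> r}"

definition induced_edges :: "'a set set \<Rightarrow> 'a set \<Rightarrow> nat" where
  "induced_edges E Y = card {e \<in> E. e \<subseteq> Y}"

definition convex_position :: "(real^2) set \<Rightarrow> bool" where
  "convex_position P \<longleftrightarrow> (\<forall>q\<in>P. q \<notin> convex hull (P - {q}))"

end

theory Submission
  imports Defs
begin

lemma aux: "u * a2 + v * b2 - 2 * t * (u * a1 + v * b1) = u * (a2 - 2 * t * a1) + v * (b2 - 2 * t * (b1::real))" by (simp add: algebra_simps)

lemma halfconv: "convex {z::real^2. z$2 - 2*t*z$1 > c}"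
proof (rule convexI)
  fix x y :: "real^2" and u v :: real
  assume x: "x \<in> {z. z$2 - 2*t*z$1 > c}" and y: "y \<in> {z. z$2 - 2*t*z$1 > c}"
     and u: "0 \<le> u" and v: "0 \<le> v" and uv: "u + v = 1"
  have "(u *\<^sub>R x + v *\<^sub>R y)$2 - 2*t*(u *\<^sub>R x + v *\<^sub>R y)$1
     = u * (x$2 - 2*t*x$1) + v * (y$2 - 2*t*y$1)" using aux by simp
  moreover have "u * (x$2 - 2*t*x$1) + v * (y$2 - 2*t*y$1) > c"
  proof (cases "u = 0")
    case True then show ?thesis using y uv by simp
  next
    case False
    then have "u * (x$2 - 2*t*x$1) > u * c" using x u by simp
    moreover have "v * (y$2 - 2*t*y$1) \<ge> v * c" using y v by (simp add: mult_left_mono)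
    ultimately show ?thesis using uv by (metis add_less_le_mono distrib_right mult_1)
  qed
  ultimately show "u *\<^sub>R x + v *\<^sub>R y \<in> {z. z$2 - 2*t*z$1 > c}" by simp
qed

definition par :: "real \<Rightarrow> real^2" where "par s = vector [s, s^2]"

lemma par_conv:
  assumes "inj_on f A"
  shows "convex_position ((\<lambda>e. par (f e)) ` A)"
  unfolding convex_position_def
proof
  fix q assume "q \<in> (\<lambda>e. par (f e)) ` A"
  then obtain e where e: "e \<in> A" "q = par (f e)" by auto
  let ?t = "f e"
  have sub: "(\<lambda>e. par (f e)) ` A - {q} \<subseteq> {z::real^2. z$2 - 2*?t*z$1 > -(?t^2)}"
  proof
    fix z assume "z \<in> (\<lambda>e. par (f e)) ` A - {q}"
    then obtain e' where e': "e' \<in> A" "z = par (f e')" "z \<noteq> q" by auto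
    then have "f e' \<noteq> f e" using e by auto
    then have "(f e' - f e)^2 > 0" by simp
    then show "z \<in> {z::real^2. z$2 - 2*?t*z$1 > -(?t^2)}" using e'
      by (simp add: par_def power2_eq_square algebra_simps)
  qed
  have "convex hull ((\<lambda>e. par (f e)) ` A - {q}) \<subseteq> {z::real^2. z$2 - 2*?t*z$1 > -(?t^2)}"
    by (rule hull_minimal[where S=convex, OF sub halfconv])
  moreover have "q \<notin> {z::real^2. z$2 - 2*?t*z$1 > -(?t^2)}" using e
    by (simp add: par_def power2_eq_square)
  ultimately show "q \<notin> convex hull ((\<lambda>e. par (f e)) ` A - {q})" by blast
qed

theorem mainTheorem5:
  fixes X :: "'a set" and E :: "'a set set"
  assumes "finite X" and "E \<subseteq> Pow X"
  shows "\<exists>(p :: 'a set \<Rightarrow> real^2) (R :: 'a \<Rightarrow> (real^2) set).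
     inj_on p E \<and> convex_position (p ` E) \<and>
     (\<forall>v\<in>X. \<exists>S. S \<subseteq> p ` E \<and> R v = convex hull S) \<and>
     (\<forall>e\<in>E. \<forall>v\<in>X. p e \<in> R v \<longleftrightarrow> v \<in> e) \<and>
     (\<forall>X'. X' \<subseteq> X \<longrightarrow>
        induced_edges E X' = card (exposed (p ` E) (R ` (X - X')))) \<and>
     (\<forall>k X'. X' \<subseteq> X \<and> card X' = k \<longrightarrow>
        ((\<forall>Y. Y \<subseteq> X \<and> card Y = k \<longrightarrow> induced_edges E Y \<le> induced_edges E X') \<longleftrightarrow>
         (\<forall>Y. Y \<subseteq> X \<and> card Y = k \<longrightarrow>
            card (exposed (p ` E) (R ` (X - Y))) \<le> card (exposed (p ` E) (R ` (X - X'))))))"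
proof -
  have finE: "finite E" by (rule finite_subset[OF assms(2)]) (simp add: assms(1))
  obtain g :: "'a set \<Rightarrow> nat" and n where g: "g ` E = {..<n}" "inj_on g E"
    using finite_imp_inj_to_nat_seg[OF finE] by blast
  define p where "p = (\<lambda>e. par (real (g e)))"
  have parinj: "par a = par b \<Longrightarrow> a = b" for a b
  proof -
    assume "par a = par b"
    then have "(par a)$1 = (par b)$1" by simp
    then show "a = b" by (simp add: par_def)
  qed
  have injp: "inj_on p E"
  proof (rule inj_onI)
    fix a b assume ab: "a \<in> E" "b \<in> E" "p a = p b"
    then have "real (g a) = real (g b)" using parinj unfolding p_def by blast
    then have "g a = g b" by simp
    then show "a = b" using g(2) ab inj_onD by metis
  qed
  have injr: "inj_on (\<lambda>e. real (g e)) E" using g(2) unfolding inj_on_def by auto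
  have cp: "convex_position (p ` E)" unfolding p_def by (rule par_conv[OF injr])
  define R where "R = (\<lambda>v. convex hull (p ` {e\<in>E. v \<in> e}))"
  have key: "p e \<in> R v \<longleftrightarrow> v \<in> e" if e: "e \<in> E" for e v
  proof
    assume "v \<in> e" then show "p e \<in> R v" unfolding R_def using e by (auto intro: hull_inc)
  next
    assume a: "p e \<in> R v"
    show "v \<in> e"
    proof (rule ccontr)
      assume "v \<notin> e"
      then have "p ` {e\<in>E. v \<in> e} \<subseteq> p ` E - {p e}" using injp e unfolding inj_on_def by auto
      then have "R v \<subseteq> convex hull (p ` E - {p e})" unfolding R_def by (rule hull_mono)
      then show False using a cp e unfolding convex_position_def by blast
    qed
  qed
  have ex: "induced_edges E X' = card (exposed (p ` E) (R ` (X - X')))" if "X' \<subseteq> X" for X'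
  proof -
    have "exposed (p ` E) (R ` (X - X')) = p ` {e\<in>E. e \<subseteq> X'}"
    proof
      show "exposed (p ` E) (R ` (X - X')) \<subseteq> p ` {e\<in>E. e \<subseteq> X'}"
      proof
        fix q assume "q \<in> exposed (p ` E) (R ` (X - X'))"
        then obtain e where e: "e \<in> E" "q = p e" "\<forall>v\<in>X - X'. p e \<notin> R v"
          unfolding exposed_def by auto
        have "e \<subseteq> X'"
        proof
          fix x assume x: "x \<in> e"
          then have "x \<in> X" using assms(2) e(1) by blast
          moreover have "p e \<in> R x" using key[OF e(1)] x by simp
          ultimately show "x \<in> X'" using e(3) by blast
        qed
        then show "q \<in> p ` {e\<in>E. e \<subseteq> X'}" using e by blast
      qed
    next
      show "p ` {e\<in>E. e \<subseteq> X'} \<subseteq> exposed (p ` E) (R ` (X - X'))"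
      proof
        fix q assume "q \<in> p ` {e\<in>E. e \<subseteq> X'}"
        then obtain e where e: "e \<in> E" "e \<subseteq> X'" "q = p e" by blast
        have "\<forall>r\<in>R ` (X - X'). q \<notin> r"
        proof
          fix r assume "r \<in> R ` (X - X')"
          then obtain v where v: "v \<in> X - X'" "r = R v" by blast
          then have "v \<notin> e" using e by blast
          then show "q \<notin> r" using key[OF e(1)] v e by simp
        qed
        then show "q \<in> exposed (p ` E) (R ` (X - X'))" unfolding exposed_def using e by blast
      qed
    qed
    moreover have "card (p ` {e\<in>E. e \<subseteq> X'}) = card {e\<in>E. e \<subseteq> X'}"
      by (rule card_image) (rule inj_on_subset[OF injp], auto)
    ultimately show ?thesis unfolding induced_edges_def by simp
  qed
  have "\<forall>v\<in>X. \<exists>S. S \<subseteq> p ` E \<and> R v = convex hull S" 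
  proof
    fix v assume "v \<in> X"
    have "p ` {e\<in>E. v \<in> e} \<subseteq> p ` E" by blast
    then show "\<exists>S. S \<subseteq> p ` E \<and> R v = convex hull S" unfolding R_def by blast
  qed
  moreover have "\<forall>e\<in>E. \<forall>v\<in>X. p e \<in> R v \<longleftrightarrow> v \<in> e" using key by simp
  moreover have "\<forall>k X'. X' \<subseteq> X \<and> card X' = k \<longrightarrow>
        ((\<forall>Y. Y \<subseteq> X \<and> card Y = k \<longrightarrow> induced_edges E Y \<le> induced_edges E X') \<longleftrightarrow>
         (\<forall>Y. Y \<subseteq> X \<and> card Y = k \<longrightarrow>
            card (exposed (p ` E) (R ` (X - Y))) \<le> card (exposed (p ` E) (R ` (X - X')))))"
  proof (intro allI impI)
    fix k X' assume h: "X' \<subseteq> X \<and> card X' = k"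
    have "\<forall>Y. Y \<subseteq> X \<and> card Y = k \<longrightarrow> (induced_edges E Y \<le> induced_edges E X' \<longleftrightarrow>
       card (exposed (p ` E) (R ` (X - Y))) \<le> card (exposed (p ` E) (R ` (X - X'))))"
      using ex h by simp
    then show "(\<forall>Y. Y \<subseteq> X \<and> card Y = k \<longrightarrow> induced_edges E Y \<le> induced_edges E X') \<longleftrightarrow>
         (\<forall>Y. Y \<subseteq> X \<and> card Y = k \<longrightarrow>
            card (exposed (p ` E) (R ` (X - Y))) \<le> card (exposed (p ` E) (R ` (X - X'))))"
      by blast
  qed
  moreover have "\<forall>X'. X' \<subseteq> X \<longrightarrow> induced_edges E X' = card (exposed (p ` E) (R ` (X - X')))"
    using ex by blast
  ultimately show ?thesis using injp cp by (intro exI[of _ p] exI[of _ R]) (intro conjI)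
qed

end
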